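(* Let $m\ge2$ and $f_1,\dots,f_m:X\to\mathbb R_{+\infty}$ with $\bigcap_{i=1}^m\operatorname{dom} f_i\ne\emptyset$, and suppose the zero function $0$ belongs to $\mathcal L$. The following are equivalent: (i) $0\in\bigcap_{\varepsilon>0}\bigcup_{x\in X}\sum_{i=1}^m\partial_\varepsilon f_i(x)$; (ii) $\left(\sum_{i=1}^m f_i\right)^*(0)=(f_1^*\square\cdots\square f_m^* )(0)<+\infty$. (Note that (ii) means the primal problem $\inf_{x\in X}\sum_i f_i(x)$ and the dual problem $\sup\{-\sum_i f_i^*(l_i): l_i\in\mathcal L,\ \sum_i l_i=0\}$ have equal, finite optimal values.)
   Context: $X$ is a nonempty set; $\mathbb R_{+\infty}=\mathbb R\cup\{+\infty\}$. A space of abstract linear functions is a family $\mathcal L$ of functions $l:X\to\mathbb R$ such that (a) $l_1,l_2\in\mathcal L$ implies $l_1+l_2\in\mathcal L$, and (b) for every $l\in\mathcal L$ and $m\in\mathbb N$ there exist $l_1,\dots,l_m\in\mathcal L$ with $l=l_1+\dots+l_m$. For $f:X\to\mathbb R_{+\infty}$: $\operatorname{dom} f=\{x:f(x)<+\infty\}$; $f^*(l)=\sup_{x\in X}(l(x)-f(x))$. Infimal convolution: $(g_1\square\cdots\square g_m)(l)=\inf\{\sum_i g_i(l_i):l_i\in\mathcal L,\ \sum_i l_i=l\}$. For $\varepsilon\ge0$ and $x\in\operatorname{dom} f$, $\partial_\varepsilon f(x)=\{l\in\mathcal L: f(y)-f(x)-(l(y)-l(x))+\varepsilon\ge0\ \forall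 y\in X\}$, and $\partial_\varepsilon f(x)=\emptyset$ if $x\notin\operatorname{dom} f$. Sums of subsets of $\mathcal L$ are Minkowski sums. *)

theory Defs
  imports "HOL-Analysis.Analysis" "HOL-Library.Extended_Real"
begin

text \<open>Functions X -> R_{+infty} are modelled as 'a => ereal never taking the value -infinity.
  Abstract linear functions are real-valued functions on 'a; L is a set of them.\<close>

definition abstract_linear_space :: "('a \<Rightarrow> real) set \<Rightarrow> bool" where
  "abstract_linear_space L \<longleftrightarrow>
     (\<forall>l1\<in>L. \<forall>l2\<in>L. (\<lambda>x. l1 x + l2 x) \<in> L) \<and>
     (\<forall>l\<in>L. \<forall>k::nat. k \<ge> 1 \<longrightarrow>
        (\<exists>ls. (\<forall>i\<in>{1..k}. ls i \<in> L) \<and> l = (\<lambda>x. \<Sum>i=1..k. ls i x)))"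

definition edom :: "('a \<Rightarrow> ereal) \<Rightarrow> 'a set" where
  "edom f = {x. f x < \<infinity>}"

definition fconj :: "('a \<Rightarrow> ereal) \<Rightarrow> ('a \<Rightarrow> real) \<Rightarrow> ereal" where
  "fconj f l = (SUP x. ereal (l x) - f x)"

definition infconv ::
  "('a \<Rightarrow> real) set \<Rightarrow> nat \<Rightarrow> (nat \<Rightarrow> ('a \<Rightarrow> real) \<Rightarrow> ereal) \<Rightarrow> ('a \<Rightarrow> real) \<Rightarrow> ereal" where
  "infconv L m g l =
     (INF ls \<in> {ls. (\<forall>i\<in>{1..m}. ls i \<in> L) \<and> (\<lambda>x. \<Sum>i=1..m. ls i x) = l}. (\<Sum>i=1..m. g i (ls i)))"

definition eps_subdiff ::
  "('a \<Rightarrow> real) set \<Rightarrow> ('a \<Rightarrow> ereal) \<Rightarrow> real \<Rightarrow> 'a \<Rightarrow> ('a \<Rightarrow> real) set" where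
  "eps_subdiff L f \<epsilon> x =
     (if x \<in> edom f
      then {l \<in> L. \<forall>y. f y - f x - ereal (l y - l x) + ereal \<epsilon> \<ge> 0}
      else {})"

definition minkowski_sum :: "nat \<Rightarrow> (nat \<Rightarrow> ('a \<Rightarrow> real) set) \<Rightarrow> ('a \<Rightarrow> real) set" where
  "minkowski_sum m A = {(\<lambda>x. \<Sum>i=1..m. ls i x) | ls. \<forall>i\<in>{1..m}. ls i \<in> A i}"

end

theory Submission
  imports Defs
begin

lemma conj_lower: "ereal (l x) - f x \<le> fconj f l"
  unfolding fconj_def by (rule SUP_upper) auto

lemma conj_le_iff: "fconj f l \<le> c \<longleftrightarrow> (\<forall>x. ereal (l x) - f x \<le> c)"
  unfolding fconj_def by (simp add: SUP_le_iff)

lemma subdiff_cond_iff: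
  assumes "f x = ereal a"
  shows "(\<forall>y. f y - f x - ereal (l y - l x) + ereal e \<ge> 0) \<longleftrightarrow>
         (\<forall>y. ereal (l y) - f y \<le> ereal (l x - a + e))"
proof -
  have "f y - f x - ereal (l y - l x) + ereal e \<ge> 0 \<longleftrightarrow> ereal (l y) - f y \<le> ereal (l x - a + e)" for y
    using assms by (cases "f y") auto
  then show ?thesis by blast
qed

lemma sum_finite_ereal:
  assumes "\<forall>i\<in>I. g i \<noteq> \<infinity> \<and> g i \<noteq> -\<infinity>"
  shows "(\<Sum>i\<in>I. g i) = ereal (\<Sum>i\<in>I. real_of_ereal (g i))"
proof -
  have "(\<Sum>i\<in>I. g i) = (\<Sum>i\<in>I. ereal (real_of_ereal (g i)))"
    using assms by (intro sum.cong) (auto simp: ereal_real)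
  then show ?thesis by simp
qed

lemma weak_duality:
  fixes f :: "nat \<Rightarrow> 'a \<Rightarrow> ereal"
  assumes fin: "\<forall>i\<in>I. \<forall>x. f i x \<noteq> -\<infinity>" and "finite I"
    and x0: "\<forall>i\<in>I. x0 \<in> edom (f i)"
    and ls: "(\<lambda>z. \<Sum>i\<in>I. ls i z) = (\<lambda>z. 0)"
  shows "fconj (\<lambda>x. \<Sum>i\<in>I. f i x) (\<lambda>x. 0) \<le> (\<Sum>i\<in>I. fconj (f i) (ls i))"
proof (cases "\<exists>i\<in>I. fconj (f i) (ls i) = \<infinity>")
  case True
  then have "(\<Sum>i\<in>I. fconj (f i) (ls i)) = \<infinity>" using \<open>finite I\<close> by (simp add: sum_Pinfty)
  then show ?thesis by simp
next
  case False
  have nm: "fconj (f i) (ls i) \<noteq> -\<infinity>" if "i \<in> I" for i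
  proof -
    have "ereal (ls i x0) - f i x0 \<le> fconj (f i) (ls i)" by (rule conj_lower)
    moreover have "f i x0 \<noteq> \<infinity>" "f i x0 \<noteq> -\<infinity>" using x0 fin that by (auto simp: edom_def)
    ultimately show ?thesis by (cases "f i x0") auto
  qed
  define g where "g i = real_of_ereal (fconj (f i) (ls i))" for i
  have geq: "fconj (f i) (ls i) = ereal (g i)" if "i \<in> I" for i
    using False nm that by (auto simp: g_def ereal_real)
  have rhs: "(\<Sum>i\<in>I. fconj (f i) (ls i)) = ereal (\<Sum>i\<in>I. g i)"
    using geq by simp
  show ?thesis unfolding rhs conj_le_iff
  proof
    fix x
    show "ereal 0 - (\<Sum>i\<in>I. f i x) \<le> ereal (sum g I)"
    proof (cases "\<exists>i\<in>I. f i x = \<infinity>")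
      case True
      then have "(\<Sum>i\<in>I. f i x) = \<infinity>" using \<open>finite I\<close> by (simp add: sum_Pinfty)
      then show ?thesis by simp
    next
      case F2: False
      define a where "a i = real_of_ereal (f i x)" for i
      have aeq: "f i x = ereal (a i)" if "i \<in> I" for i
        using F2 fin that by (auto simp: a_def ereal_real)
      have s: "(\<Sum>i\<in>I. f i x) = ereal (\<Sum>i\<in>I. a i)" using aeq by simp
      have le: "ls i x - a i \<le> g i" if "i \<in> I" for i
        using conj_lower[of "ls i" x "f i"] aeq[OF that] geq[OF that] by simp
      have "(\<Sum>i\<in>I. ls i x - a i) \<le> sum g I" using le by (rule sum_mono)
      moreover have "(\<Sum>i\<in>I. ls i x) = 0" using fun_cong[OF ls, of x] by simp
      ultimately have "- (\<Sum>i\<in>I. a i) \<le> sum g I" by (simp add: sum_subtractf)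
      then show ?thesis unfolding s by simp
    qed
  qed
qed

theorem mainTheorem5:
  fixes L :: "('a \<Rightarrow> real) set" and f :: "nat \<Rightarrow> 'a \<Rightarrow> ereal" and m :: nat
  assumes "abstract_linear_space L"
    and "m \<ge> 2"
    and "\<forall>i\<in>{1..m}. \<forall>x. f i x \<noteq> -\<infinity>"
    and "(\<Inter>i\<in>{1..m}. edom (f i)) \<noteq> {}"
    and "(\<lambda>x::'a. 0::real) \<in> L"
  shows "((\<lambda>x::'a. 0::real) \<in> (\<Inter>\<epsilon>\<in>{\<epsilon>::real. \<epsilon> > 0}. \<Union>x. minkowski_sum m (\<lambda>i. eps_subdiff L (f i) \<epsilon> x)))
     \<longleftrightarrow> (fconj (\<lambda>x. \<Sum>i=1..m. f i x) (\<lambda>x. 0) = infconv L m (\<lambda>i. fconj (f i)) (\<lambda>x. 0)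
          \<and> fconj (\<lambda>x. \<Sum>i=1..m. f i x) (\<lambda>x. 0) < \<infinity>)"
proof -
  note fin = assms(3)
  obtain x0 where x0: "\<forall>i\<in>{1..m}. x0 \<in> edom (f i)" using assms(4) by blast
  define Fs where "Fs = fconj (\<lambda>x. \<Sum>i=1..m. f i x) (\<lambda>x. 0)"
  define IC where "IC = infconv L m (\<lambda>i. fconj (f i)) (\<lambda>x. 0)"
  define S where "S = {ls. (\<forall>i\<in>{1..m}. ls i \<in> L) \<and> (\<lambda>x. \<Sum>i=1..m. ls i x) = (\<lambda>x::'a. 0::real)}"
  have IC_def': "IC = (INF ls\<in>S. (\<Sum>i=1..m. fconj (f i) (ls i)))"
    unfolding IC_def infconv_def S_def by simp
  have weak: "Fs \<le> IC"
    unfolding IC_def' Fs_def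
    by (rule INF_greatest, rule weak_duality) (use fin x0 in \<open>auto simp: S_def\<close>)
  have Fs_low: "ereal 0 - (\<Sum>i=1..m. f i x) \<le> Fs" for x
    unfolding Fs_def by (rule conj_lower)
  have mpos: "m > 0" using assms(2) by simp
  show ?thesis
    unfolding Fs_def[symmetric] IC_def[symmetric]
  proof
    assume H: "(\<lambda>x::'a. 0::real) \<in> (\<Inter>\<epsilon>\<in>{\<epsilon>::real. \<epsilon> > 0}. \<Union>x. minkowski_sum m (\<lambda>i. eps_subdiff L (f i) \<epsilon> x))"
    have key: "IC \<le> Fs + ereal (real m * e)" "Fs < \<infinity>" if epos: "e > 0" for e
    proof -
      from H epos obtain x where "(\<lambda>x::'a. 0::real) \<in> minkowski_sum m (\<lambda>i. eps_subdiff L (f i) e x)"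
        by auto
      then obtain ls where ls0: "(\<lambda>x::'a. 0::real) = (\<lambda>x. \<Sum>i=1..m. ls i x)"
        and lsd: "\<forall>i\<in>{1..m}. ls i \<in> eps_subdiff L (f i) e x"
        unfolding minkowski_sum_def by auto
      have xd: "x \<in> edom (f i)" "ls i \<in> L" if "i \<in> {1..m}" for i
        using lsd that by (auto simp: eps_subdiff_def split: if_splits)
      define a where "a i = real_of_ereal (f i x)" for i
      have aeq: "f i x = ereal (a i)" if "i \<in> {1..m}" for i
        using xd(1)[OF that] fin that by (auto simp: a_def ereal_real edom_def)
      have cb: "fconj (f i) (ls i) \<le> ereal (ls i x - a i + e)" if "i \<in> {1..m}" for i
      proof -
        have "\<forall>y. f i y - f i x - ereal (ls i y - ls i x) + ereal e \<ge> 0"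
        proof -
          have "ls i \<in> eps_subdiff L (f i) e x" using lsd that by blast
          then show ?thesis using xd(1)[OF that] by (simp add: eps_subdiff_def)
        qed
        then show ?thesis unfolding conj_le_iff subdiff_cond_iff[where f="f i" and x=x, OF aeq[OF that]] .
      qed
      have lsS: "ls \<in> S" unfolding S_def using xd(2) ls0 by auto
      have "IC \<le> (\<Sum>i=1..m. fconj (f i) (ls i))"
        unfolding IC_def' by (rule INF_lower) (rule lsS)
      also have "\<dots> \<le> (\<Sum>i=1..m. ereal (ls i x - a i + e))"
        by (rule sum_mono) (rule cb)
      also have "\<dots> = ereal ((\<Sum>i=1..m. ls i x) - (\<Sum>i=1..m. a i) + real m * e)"
        by (simp add: sum.distrib sum_subtractf)
      also have "(\<Sum>i=1..m. ls i x) = 0" using fun_cong[OF ls0, of x] by simp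
      finally have A: "IC \<le> ereal (- (\<Sum>i=1..m. a i)) + ereal (real m * e)" by simp
      have "ereal 0 - (\<Sum>i=1..m. f i x) = ereal (- (\<Sum>i=1..m. a i))"
        using aeq by simp
      then have B: "ereal (- (\<Sum>i=1..m. a i)) \<le> Fs" using Fs_low[of x] by simp
      have "ereal (- (\<Sum>i=1..m. a i)) + ereal (real m * e) \<le> Fs + ereal (real m * e)"
        by (rule add_right_mono[OF B])
      then show "IC \<le> Fs + ereal (real m * e)" by (rule order_trans[OF A])
      have "IC \<le> ereal (- (\<Sum>i=1..m. a i) + real m * e)" using A by simp
      with weak have "Fs \<le> ereal (- (\<Sum>i=1..m. a i) + real m * e)" by (rule order_trans)
      then show "Fs < \<infinity>" by (rule le_less_trans) simp
    qed
    have "IC \<le> Fs"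
    proof (rule ereal_le_epsilon2)
      fix e :: real assume "0 < e"
      then have "e / real m > 0" using mpos by simp
      from key(1)[OF this] show "IC \<le> Fs + ereal e" using mpos by simp
    qed
    with weak key(2)[of 1] show "Fs = IC \<and> Fs < \<infinity>" by auto
  next
    assume H: "Fs = IC \<and> Fs < \<infinity>"
    have Fnm: "Fs \<noteq> -\<infinity>"
    proof -
      define a where "a i = real_of_ereal (f i x0)" for i
      have aeq: "f i x0 = ereal (a i)" if "i \<in> {1..m}" for i
        using x0 fin that by (auto simp: a_def ereal_real edom_def)
      have "ereal 0 - (\<Sum>i=1..m. f i x0) = ereal (- (\<Sum>i=1..m. a i))"
        using aeq by simp
      then show ?thesis using Fs_low[of x0] by auto
    qed
    define c where "c = real_of_ereal Fs"
    have Fc: "Fs = ereal c" using H Fnm by (auto simp: c_def ereal_real)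
    show "(\<lambda>x::'a. 0::real) \<in> (\<Inter>\<epsilon>\<in>{\<epsilon>::real. \<epsilon> > 0}. \<Union>x. minkowski_sum m (\<lambda>i. eps_subdiff L (f i) \<epsilon> x))"
    proof (rule INT_I)
      fix e :: real assume "e \<in> {e. e > 0}"
      then have epos: "e > 0" by simp
      have ICc: "IC = ereal c" using H Fc by simp
      have "IC < ereal (c + e/2)" unfolding ICc using epos by simp
      then obtain ls where lsS: "ls \<in> S" and lsl: "(\<Sum>i=1..m. fconj (f i) (ls i)) < ereal (c + e/2)"
        unfolding IC_def' by (auto simp: INF_less_iff)
      have "ereal (c - e/2) < Fs" using Fc epos by simp
      then obtain x where xl: "ereal (c - e/2) < ereal 0 - (\<Sum>i=1..m. f i x)"
        unfolding Fs_def fconj_def by (auto simp: less_SUP_iff)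
      have nI: "\<not> (\<exists>i\<in>{1..m}. f i x = \<infinity>)"
      proof
        assume "\<exists>i\<in>{1..m}. f i x = \<infinity>"
        then have "(\<Sum>i=1..m. f i x) = \<infinity>" by (simp add: sum_Pinfty)
        then show False using xl by simp
      qed
      define a where "a i = real_of_ereal (f i x)" for i
      have aeq: "f i x = ereal (a i)" if "i \<in> {1..m}" for i
        using nI fin that by (auto simp: a_def ereal_real)
      have asum: "c - e/2 < - (\<Sum>i=1..m. a i)" using xl aeq by simp
      have nm: "fconj (f i) (ls i) \<noteq> -\<infinity>" if "i \<in> {1..m}" for i
        using conj_lower[of "ls i" x "f i"] aeq[OF that] by auto
      have nI2: "\<not> (\<exists>i\<in>{1..m}. fconj (f i) (ls i) = \<infinity>)"
      proof
        assume "\<exists>i\<in>{1..m}. fconj (f i) (ls i) = \<infinity>"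
        then have "(\<Sum>i=1..m. fconj (f i) (ls i)) = \<infinity>" by (simp add: sum_Pinfty)
        then show False using lsl by simp
      qed
      define g where "g i = real_of_ereal (fconj (f i) (ls i))" for i
      have geq: "fconj (f i) (ls i) = ereal (g i)" if "i \<in> {1..m}" for i
        using nI2 nm that by (auto simp: g_def ereal_real)
      have gsum: "(\<Sum>i=1..m. g i) < c + e/2" using lsl geq by simp
      have lsL: "ls i \<in> L" if "i \<in> {1..m}" for i using lsS that by (auto simp: S_def)
      have ls0: "(\<lambda>x. \<Sum>i=1..m. ls i x) = (\<lambda>x::'a. 0::real)" using lsS by (auto simp: S_def)
      have lx0: "(\<Sum>i=1..m. ls i x) = 0" using fun_cong[OF ls0, of x] by simp
      have gle: "ls i x - a i \<le> g i" if "i \<in> {1..m}" for i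
        using conj_lower[of "ls i" x "f i"] aeq[OF that] geq[OF that] by simp
      have teq: "(\<Sum>i=1..m. g i - (ls i x - a i)) = (\<Sum>i=1..m. g i) - (\<Sum>i=1..m. ls i x) + (\<Sum>i=1..m. a i)"
        by (simp add: sum_subtractf sum.distrib)
      have tot: "(\<Sum>i=1..m. g i - (ls i x - a i)) < e"
        unfolding teq lx0 using gsum asum by linarith
      have each: "g j - (ls j x - a j) \<le> (\<Sum>i=1..m. g i - (ls i x - a i))" if "j \<in> {1..m}" for j
      proof (rule member_le_sum[OF that])
        fix i assume "i \<in> {1..m} - {j}"
        then show "0 \<le> g i - (ls i x - a i)" using gle by auto
      qed simp
      have mem: "(\<lambda>x::'a. 0::real) \<in> minkowski_sum m (\<lambda>i. eps_subdiff L (f i) e x)"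
        unfolding minkowski_sum_def
      proof (rule CollectI, rule exI[of _ ls], intro conjI ballI)
        show "(\<lambda>x::'a. 0::real) = (\<lambda>x. \<Sum>i=1..m. ls i x)" using ls0 by simp
      next
        fix i assume i: "i \<in> {1..m}"
        have xd: "x \<in> edom (f i)" using aeq[OF i] by (simp add: edom_def)
        have "fconj (f i) (ls i) \<le> ereal (ls i x - a i + e)"
        proof -
          have "g i \<le> ls i x - a i + e" using each[OF i] tot by linarith
          then show ?thesis unfolding geq[OF i] by simp
        qed
        then have "\<forall>y. f i y - f i x - ereal (ls i y - ls i x) + ereal e \<ge> 0"
          unfolding conj_le_iff subdiff_cond_iff[where f="f i" and x=x, OF aeq[OF i]] .
        then show "ls i \<in> eps_subdiff L (f i) e x"
          using xd lsL[OF i] by (simp add: eps_subdiff_def)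
      qed
      then show "(\<lambda>x::'a. 0::real) \<in> (\<Union>x. minkowski_sum m (\<lambda>i. eps_subdiff L (f i) e x))"
        by (rule UN_I[OF UNIV_I])
    qed
  qed
qed

end
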